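(* Fix parameters $\gamma\in(0,1)$, $a\in(1,1/\gamma)$ and $\kappa\in(0,1]$. For large $T$, with $N=[T^{\kappa}]$ and with $f$, $\mathcal{M}$, $R$, $\Phi$ as defined in the context, \[ \int_{-\infty}^{\infty}|R(t)|^2\,\Phi\Big(\frac tT\Big)\,dt \ll T\sum_{n\in\mathcal{M}}f(n)^2, \] with an implied constant independent of $T$.
   Context: Write $\log_2x=\log\log x$, $\log_3 x=\log\log\log x$, and $\Phi(t):=e^{-t^2/2}$. Let $P$ be the set of primes $p$ with $e\log N\log_2N<p\le \log N\exp((\log_2N)^{\gamma})\log_2N$. Let $f$ be the multiplicative function supported on squarefree integers with $f(p)=\sqrt{\frac{\log N\log_2N}{\log_3N}}\cdot\frac{1}{\sqrt p(\log p-\log_2N-\log_3N)}$ for $p\in P$ and $f(p)=0$ for primes $p\notin P$. For $k=1,\dots,[(\log_2N)^{\gamma}]$ let $P_k$ be the set of primes with $e^k\log N\log_2N<p\le e^{k+1}\log N\log_2N$ and $M_k$ the set of integers having at least $\frac{a\log N}{k^2\log_3N}$ prime divisors in $P_k$; set $\mathcal{M}:=\operatorname{supp}(f)\setminus\bigcup_kM_k$. Let $\mathcal{J}$ be the set of integers $j$ such that $[(1+T^{-1})^j,(1+T^{-1})^{j+1})\cap\mathcal{M}\neq\emptyset$, let $m_j$ be the minimum of this intersection, $\mathcal{M}':=\{m_j:j\in\mathcal{J}\}$, and $r(m_j):=\big(\sum_{n\in\mathcal{M},\,(1+T^{-1})^{j-1}\le n\le(1+T^{-1})^{j+2}}f(n)^2\big)^{1/2}$.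 Finally $R(t):=\sum_{m\in\mathcal{M}'}r(m)m^{-it}$. *)

theory Defs
  imports "HOL-Analysis.Analysis" "HOL-Computational_Algebra.Computational_Algebra"
begin

definition L2 :: "real \<Rightarrow> real" where "L2 x = ln (ln x)"
definition L3 :: "real \<Rightarrow> real" where "L3 x = ln (ln (ln x))"

definition Phi :: "real \<Rightarrow> real" where "Phi t = exp (- (t^2) / 2)"

definition Pset :: "real \<Rightarrow> nat \<Rightarrow> nat set" where
  "Pset \<gamma> N = {p. prime p \<and> exp 1 * ln (real N) * L2 (real N) < real p \<and>
      real p \<le> ln (real N) * exp (L2 (real N) powr \<gamma>) * L2 (real N)}"

definition fprime :: "real \<Rightarrow> nat \<Rightarrow> nat \<Rightarrow> real" where
  "fprime \<gamma> N p = (if p \<in> Pset \<gamma> N then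
      sqrt (ln (real N) * L2 (real N) / L3 (real N)) *
      (1 / (sqrt (real p) * (ln (real p) - L2 (real N) - L3 (real N))))
    else 0)"

definition fmult :: "real \<Rightarrow> nat \<Rightarrow> nat \<Rightarrow> real" where
  "fmult \<gamma> N n = (if squarefree n then (\<Prod>p\<in>prime_factors n. fprime \<gamma> N p) else 0)"

definition Pk :: "nat \<Rightarrow> nat \<Rightarrow> nat set" where
  "Pk N k = {p. prime p \<and> exp (real k) * ln (real N) * L2 (real N) < real p \<and>
      real p \<le> exp (real k + 1) * ln (real N) * L2 (real N)}"

definition Mk :: "real \<Rightarrow> nat \<Rightarrow> nat \<Rightarrow> nat set" where
  "Mk a N k = {n. real (card (prime_factors n \<inter> Pk N k)) \<ge>
      a * ln (real N) / ((real k)^2 * L3 (real N))}"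

definition Mcal :: "real \<Rightarrow> real \<Rightarrow> nat \<Rightarrow> nat set" where
  "Mcal \<gamma> a N = {n. fmult \<gamma> N n \<noteq> 0} -
      (\<Union>k\<in>{1..nat \<lfloor>L2 (real N) powr \<gamma>\<rfloor>}. Mk a N k)"

definition Ival :: "real \<Rightarrow> int \<Rightarrow> real set" where
  "Ival T j = {x. (1 + 1/T) powi j \<le> x \<and> x < (1 + 1/T) powi (j + 1)}"

definition Jset :: "real \<Rightarrow> real \<Rightarrow> nat \<Rightarrow> real \<Rightarrow> int set" where
  "Jset \<gamma> a N T = {j. \<exists>n\<in>Mcal \<gamma> a N. real n \<in> Ival T j}"

definition mj :: "real \<Rightarrow> real \<Rightarrow> nat \<Rightarrow> real \<Rightarrow> int \<Rightarrow> nat" where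
  "mj \<gamma> a N T j = Min {n \<in> Mcal \<gamma> a N. real n \<in> Ival T j}"

definition Mprime :: "real \<Rightarrow> real \<Rightarrow> nat \<Rightarrow> real \<Rightarrow> nat set" where
  "Mprime \<gamma> a N T = mj \<gamma> a N T ` Jset \<gamma> a N T"

definition rj :: "real \<Rightarrow> real \<Rightarrow> nat \<Rightarrow> real \<Rightarrow> int \<Rightarrow> real" where
  "rj \<gamma> a N T j = sqrt (\<Sum>n\<in>{n \<in> Mcal \<gamma> a N. (1 + 1/T) powi (j - 1) \<le> real n \<and>
       real n \<le> (1 + 1/T) powi (j + 2)}. (fmult \<gamma> N n)^2)"

definition rfun :: "real \<Rightarrow> real \<Rightarrow> nat \<Rightarrow> real \<Rightarrow> nat \<Rightarrow> real" where
  "rfun \<gamma> a N T m = rj \<gamma> a N T (THE j. j \<in> Jset \<gamma> a N T \<and> mj \<gamma> a N T j = m)"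

definition Rfun :: "real \<Rightarrow> real \<Rightarrow> nat \<Rightarrow> real \<Rightarrow> real \<Rightarrow> complex" where
  "Rfun \<gamma> a N T t = (\<Sum>m\<in>Mprime \<gamma> a N T.
      complex_of_real (rfun \<gamma> a N T m) * (of_nat m) powr (- (\<i> * complex_of_real t)))"

end

theory Submission
  imports Defs "HOL-Probability.Probability"
begin

lemma gauss_cos:
  fixes T l :: real assumes T: "T > 0"
  shows "((\<lambda>t. cos (t * l) * Phi (t / T)) has_integral T * sqrt (2*pi) * exp (- ((T*l)^2) / 2)) UNIV"
proof -
  define s where "s = T * l"
  interpret real_distribution std_normal_distribution by (rule real_dist_normal_dist)
  have i: "integrable std_normal_distribution (\<lambda>x. iexp (s * x))"
    by (rule integrable_iexp) auto
  have ir: "integrable std_normal_distribution (\<lambda>x. cos (s * x))"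
    using integrable_Re[OF i] by (simp add: cos_exp_eq[symmetric] Re_exp)
  have "char std_normal_distribution s = complex_of_real (exp (- (s^2) / 2))"
    by (simp add: char_std_normal_distribution)
  hence "Re (CLINT x|std_normal_distribution. iexp (s * x)) = exp (- (s^2) / 2)"
    unfolding char_def by simp
  hence e: "(LINT x|std_normal_distribution. cos (s * x)) = exp (- (s^2) / 2)"
    using integral_Re[OF i] by (simp add: Re_exp)
  have g1: "integrable lborel (\<lambda>x. std_normal_density x * cos (s * x))"
    using ir by (subst (asm) integrable_density) (auto simp: normal_density_nonneg)
  have g2: "(LINT x|lborel. std_normal_density x * cos (s * x)) = exp (- (s^2) / 2)"
    using e by (subst (asm) integral_density) (auto simp: normal_density_nonneg)
  define h where "h = (\<lambda>t. cos (t * l) * Phi (t / T))"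
  have hx: "h (0 + T * x) = sqrt (2*pi) * (std_normal_density x * cos (s * x))" for x
    using T by (simp add: h_def Phi_def std_normal_density_def s_def mult_ac)
  have "integrable lborel (\<lambda>x. h (0 + T * x))"
    unfolding hx using g1 by simp
  hence hi: "integrable lborel h"
    using lborel_integrable_real_affine_iff[of T h 0] T by simp
  have "(LINT x|lborel. h x) = \<bar>T\<bar> *\<^sub>R (LINT x|lborel. h (0 + T * x))"
    by (rule lborel_integral_real_affine) (use T in simp)
  also have "\<dots> = T * sqrt (2*pi) * exp (- ((T*l)^2) / 2)"
    unfolding hx using T g2 by (simp add: s_def)
  finally show ?thesis using has_integral_integral_lborel[OF hi] by (simp add: h_def)
qed


lemma powi_exp: "0 < (b::real) \<Longrightarrow> b powi j = exp (of_int j * ln b)"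
  by (metis exp_ln exp_power_int)

lemma Ival_iff:
  assumes T: "T > 0" and x: "x > 0"
  shows "x \<in> Ival T j \<longleftrightarrow> j = \<lfloor>ln x / ln (1 + 1/T)\<rfloor>"
proof -
  define L where "L = ln (1 + 1/T)"
  have L: "L > 0" unfolding L_def using T by (intro ln_gt_zero) simp
  have "x \<in> Ival T j \<longleftrightarrow> exp (of_int j * L) \<le> x \<and> x < exp (of_int (j+1) * L)"
    using T by (simp add: Ival_def powi_exp L_def add_pos_pos)
  also have "\<dots> \<longleftrightarrow> of_int j * L \<le> ln x \<and> ln x < of_int (j+1) * L"
    using x by (metis exp_le_cancel_iff exp_less_cancel_iff exp_ln)
  also have "\<dots> \<longleftrightarrow> of_int j \<le> ln x / L \<and> ln x / L < of_int j + 1"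
    using L by (simp add: pos_le_divide_eq pos_divide_less_eq)
  also have "\<dots> \<longleftrightarrow> j = \<lfloor>ln x / L\<rfloor>" by (metis floor_eq_iff)
  finally show ?thesis by (simp add: L_def)
qed

lemma Mcal_props: "finite (Mcal \<gamma> a N) \<and> 0 \<notin> Mcal \<gamma> a N"
proof -
  define P where "P = Pset \<gamma> N"
  have fP: "finite P"
  proof -
    define B where "B = ln (real N) * exp (L2 (real N) powr \<gamma>) * L2 (real N)"
    have "P \<subseteq> {..nat \<lceil>B\<rceil>}"
    proof
      fix p assume "p \<in> P"
      hence "real p \<le> B" unfolding P_def Pset_def B_def by auto
      hence "of_int (int p) \<le> B" by simp
      hence "int p \<le> \<lceil>B\<rceil>" by (meson le_of_int_ceiling order_trans of_int_le_iff)
      thus "p \<in> {..nat \<lceil>B\<rceil>}" by simp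
    qed
    thus ?thesis by (rule finite_subset) auto
  qed
  have sub: "{n. fmult \<gamma> N n \<noteq> 0} \<subseteq> (\<lambda>A. \<Prod>A) ` Pow P"
  proof
    fix n assume "n \<in> {n. fmult \<gamma> N n \<noteq> 0}"
    hence sq: "squarefree n" and pr: "(\<Prod>p\<in>prime_factors n. fprime \<gamma> N p) \<noteq> 0"
      by (auto simp: fmult_def split: if_splits)
    have n0: "n \<noteq> 0" using sq by (metis not_squarefree_0)
    have "prime_factors n \<subseteq> P"
    proof
      fix p assume p: "p \<in> prime_factors n"
      hence "fprime \<gamma> N p \<noteq> 0" using pr by auto
      thus "p \<in> P" by (auto simp: fprime_def P_def split: if_splits)
    qed
    moreover have "n = \<Prod>(prime_factors n)"
    proof -
      have "n = (\<Prod>p \<in> prime_factors n. p ^ multiplicity p n)"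
        using n0 prime_factorization_nat by blast
      also have "\<dots> = (\<Prod>p \<in> prime_factors n. p)"
        using sq n0 squarefree_factorial_semiring'[of n] by (intro prod.cong) auto
      finally show ?thesis by simp
    qed
    ultimately show "n \<in> (\<lambda>A. \<Prod>A) ` Pow P" by blast
  qed
  have "finite {n. fmult \<gamma> N n \<noteq> 0}"
    by (rule finite_subset[OF sub]) (use fP in auto)
  hence "finite (Mcal \<gamma> a N)" unfolding Mcal_def by auto
  moreover have "0 \<notin> Mcal \<gamma> a N" by (simp add: Mcal_def fmult_def)
  ultimately show ?thesis by blast
qed


lemma sq_norm_sum:
  assumes "finite J"
  shows "(cmod (\<Sum>j\<in>J. complex_of_real (c j) * exp (- (\<i> * complex_of_real t) * complex_of_real (x j))))^2
       = (\<Sum>j\<in>J. \<Sum>k\<in>J. c j * c k * cos (t * (x j - x k)))"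
proof -
  define z where "z = (\<Sum>j\<in>J. complex_of_real (c j) * exp (- (\<i> * complex_of_real t) * complex_of_real (x j)))"
  have e: "exp (- (\<i> * complex_of_real t) * complex_of_real (x j)) = cis (- (t * x j))" for j
    by (simp add: cis_conv_exp mult_ac)
  have re: "Re z = (\<Sum>j\<in>J. c j * cos (t * x j))"
    unfolding z_def e by (simp add: Re_sum)
  have im: "Im z = - (\<Sum>j\<in>J. c j * sin (t * x j))"
    unfolding z_def e by (simp add: Im_sum sum_negf)
  have "(cmod z)^2 = (Re z)^2 + (Im z)^2" by (simp add: cmod_power2)
  also have "\<dots> = (\<Sum>j\<in>J. \<Sum>k\<in>J. c j * c k * (cos (t * x j) * cos (t * x k) + sin (t * x j) * sin (t * x k)))"
    unfolding re im power2_eq_square minus_mult_minus sum_product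
    by (simp add: sum.distrib algebra_simps)
  also have "\<dots> = (\<Sum>j\<in>J. \<Sum>k\<in>J. c j * c k * cos (t * (x j - x k)))"
    by (simp add: cos_diff right_diff_distrib)
  finally show ?thesis by (simp add: z_def)
qed

lemma cs_bound:
  fixes c :: "'a \<Rightarrow> real"
  assumes "finite J" "\<And>j k. j \<in> J \<Longrightarrow> k \<in> J \<Longrightarrow> E j k \<ge> 0"
    "\<And>j k. E j k = E k j"
  shows "(\<Sum>j\<in>J. \<Sum>k\<in>J. c j * c k * E j k) \<le> (\<Sum>j\<in>J. (c j)^2 * (\<Sum>k\<in>J. E j k))"
proof -
  have "(\<Sum>j\<in>J. \<Sum>k\<in>J. c j * c k * E j k) \<le> (\<Sum>j\<in>J. \<Sum>k\<in>J. ((c j)^2 * E j k + (c k)^2 * E j k) / 2)"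
  proof (intro sum_mono)
    fix j k assume "j \<in> J" "k \<in> J"
    hence E: "E j k \<ge> 0" using assms(2) by auto
    have "2 * (c j * c k) \<le> (c j)^2 + (c k)^2" using sum_squares_bound[of "c j" "c k"] by simp
    hence "2 * (c j * c k) * E j k \<le> ((c j)^2 + (c k)^2) * E j k" using E by (rule mult_right_mono)
    thus "c j * c k * E j k \<le> ((c j)^2 * E j k + (c k)^2 * E j k) / 2" by (simp add: algebra_simps)
  qed
  also have "\<dots> = ((\<Sum>j\<in>J. \<Sum>k\<in>J. (c j)^2 * E j k) + (\<Sum>j\<in>J. \<Sum>k\<in>J. (c k)^2 * E j k)) / 2"
    by (simp add: sum.distrib sum_divide_distrib add_divide_distrib)
  also have "(\<Sum>j\<in>J. \<Sum>k\<in>J. (c k)^2 * E j k) = (\<Sum>j\<in>J. \<Sum>k\<in>J. (c j)^2 * E j k)"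
    by (subst sum.swap) (simp add: assms(3))
  also have "(\<Sum>j\<in>J. \<Sum>k\<in>J. (c j)^2 * E j k) = (\<Sum>j\<in>J. (c j)^2 * (\<Sum>k\<in>J. E j k))"
    by (simp add: sum_distrib_left)
  finally show ?thesis by simp
qed

lemma geom_half:
  fixes A :: "int set" and q :: real
  assumes "finite A" "0 \<le> q" "q < 1"
  shows "(\<Sum>k\<in>A. q ^ nat \<bar>k\<bar>) \<le> 2 / (1 - q)"
proof -
  have g: "(\<Sum>m\<in>F. q ^ m) \<le> 1 / (1 - q)" if "finite F" for F :: "nat set"
  proof -
    have "(\<Sum>m\<in>F. q ^ m) \<le> (\<Sum>m. q ^ m)"
      by (rule sum_le_suminf) (use that assms in \<open>auto intro: summable_geometric\<close>)
    also have "\<dots> = 1 / (1 - q)" using suminf_geometric[of q] assms by simp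
    finally show ?thesis .
  qed
  have split: "(\<Sum>k\<in>A. q ^ nat \<bar>k\<bar>) = (\<Sum>k\<in>A \<inter> {0..}. q ^ nat \<bar>k\<bar>) + (\<Sum>k\<in>A - {0..}. q ^ nat \<bar>k\<bar>)"
    using assms(1) by (metis sum.Int_Diff)
  have i1: "inj_on (\<lambda>k. nat \<bar>k\<bar>) (A \<inter> {0..})" by (auto simp: inj_on_def)
  have i2: "inj_on (\<lambda>k. nat \<bar>k\<bar>) (A - {0..})" by (auto simp: inj_on_def)
  have "(\<Sum>k\<in>A \<inter> {0..}. q ^ nat \<bar>k\<bar>) = (\<Sum>m\<in>(\<lambda>k. nat \<bar>k\<bar>) ` (A \<inter> {0..}). q ^ m)"
    by (rule sym, rule sum.reindex_cong[OF i1]) auto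
  also have "\<dots> \<le> 1 / (1 - q)" by (rule g) (use assms in auto)
  finally have 1: "(\<Sum>k\<in>A \<inter> {0..}. q ^ nat \<bar>k\<bar>) \<le> 1 / (1 - q)" .
  have "(\<Sum>k\<in>A - {0..}. q ^ nat \<bar>k\<bar>) = (\<Sum>m\<in>(\<lambda>k. nat \<bar>k\<bar>) ` (A - {0..}). q ^ m)"
    by (rule sym, rule sum.reindex_cong[OF i2]) auto
  also have "\<dots> \<le> 1 / (1 - q)" by (rule g) (use assms in auto)
  finally have 2: "(\<Sum>k\<in>A - {0..}. q ^ nat \<bar>k\<bar>) \<le> 1 / (1 - q)" .
  show ?thesis using split 1 2 by simp
qed


lemma TL_bound:
  assumes T: "T \<ge> (2::real)"
  shows "T * ln (1 + 1/T) \<ge> 1/2"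
proof -
  have x: "0 \<le> 1/T" "1/T \<le> 1" using T by auto
  have "1/T - (1/T)^2 \<le> ln (1 + 1/T)" by (rule ln_one_plus_pos_lower_bound[OF x])
  hence "T * (1/T - (1/T)^2) \<le> T * ln (1 + 1/T)" using T by (intro mult_left_mono) auto
  moreover have "T * (1/T - (1/T)^2) = 1 - 1/T" using T by (simp add: field_simps power2_eq_square)
  moreover have "1/T \<le> 1/2" using T by (simp add: field_simps)
  ultimately show ?thesis by linarith
qed

lemma core:
  fixes \<gamma> a T :: real and N :: nat
  assumes T: "T \<ge> 2"
  defines "K \<equiv> exp (3/8) * (2 / (1 - exp (-1/4)))"
  shows "(\<lambda>t. (cmod (Rfun \<gamma> a N T t))^2 * Phi (t / T)) integrable_on UNIV \<and>
    integral UNIV (\<lambda>t. (cmod (Rfun \<gamma> a N T t))^2 * Phi (t / T))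
      \<le> (4 * sqrt (2*pi) * K) * T * (\<Sum>n\<in>Mcal \<gamma> a N. (fmult \<gamma> N n)^2)"
proof -
  define M where "M = Mcal \<gamma> a N"
  define J where "J = Jset \<gamma> a N T"
  define m where "m = mj \<gamma> a N T"
  define c where "c = rj \<gamma> a N T"
  define g where "g = (\<lambda>n. (fmult \<gamma> N n)^2)"
  define L where "L = ln (1 + 1/T)"
  define idx where "idx = (\<lambda>n::nat. \<lfloor>ln (real n) / L\<rfloor>)"
  define x where "x = (\<lambda>j. ln (real (m j)))"
  have T0: "T > 0" using T by simp
  have L0: "L > 0" unfolding L_def using T0 by (intro ln_gt_zero) simp
  have TL: "T * L \<ge> 1/2" unfolding L_def using TL_bound[OF T] .
  have fM: "finite M" and M0: "0 \<notin> M" using Mcal_props unfolding M_def by auto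
  have pos: "n \<in> M \<Longrightarrow> real n > 0" for n using M0 by (cases n) auto
  have Iv: "n \<in> M \<Longrightarrow> real n \<in> Ival T j \<longleftrightarrow> j = idx n" for n j
    using Ival_iff[OF T0 pos] unfolding idx_def L_def by blast
  have Jeq: "J = idx ` M" unfolding J_def Jset_def M_def[symmetric] using Iv by auto
  have fJ: "finite J" using Jeq fM by simp
  have powi: "(1 + 1/T) powi j = exp (of_int j * L)" for j
    unfolding L_def using T0 by (intro powi_exp) (simp add: add_pos_pos)
  have mprop: "m j \<in> M \<and> real (m j) \<in> Ival T j" if j: "j \<in> J" for j
  proof -
    define S where "S = {n \<in> M. real n \<in> Ival T j}"
    obtain n where n: "n \<in> M" "j = idx n" using j Jeq by auto
    have "n \<in> S" using n Iv by (simp add: S_def)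
    hence "Min S \<in> S" using fM by (intro Min_in) (auto simp: S_def)
    moreover have "m j = Min S" by (simp add: m_def mj_def S_def M_def)
    ultimately show ?thesis by (simp add: S_def)
  qed
  have midx: "j \<in> J \<Longrightarrow> idx (m j) = j" for j using mprop Iv by metis
  have mb: "exp (of_int j * L) \<le> real (m j) \<and> real (m j) < exp (of_int (j+1) * L)" if "j \<in> J" for j
    using mprop[OF that] unfolding Ival_def powi by auto
  have xb: "of_int j * L \<le> x j \<and> x j < of_int (j+1) * L" if "j \<in> J" for j
  proof -
    have p: "real (m j) > 0" using mb[OF that] by (meson exp_gt_zero less_le_trans)
    show ?thesis using mb[OF that] p unfolding x_def
      by (metis exp_le_cancel_iff exp_less_cancel_iff exp_ln)
  qed
  have inj: "inj_on m J" by (metis inj_onI midx)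
  have rf: "rfun \<gamma> a N T (m j) = c j" if j: "j \<in> J" for j
  proof -
    have "(THE j'. j' \<in> Jset \<gamma> a N T \<and> mj \<gamma> a N T j' = m j) = j"
      using j inj by (intro the_equality) (auto simp: J_def[symmetric] m_def[symmetric] inj_on_def)
    thus ?thesis by (simp add: rfun_def c_def)
  qed
  have Rf: "Rfun \<gamma> a N T t = (\<Sum>j\<in>J. complex_of_real (c j) *
       exp (- (\<i> * complex_of_real t) * complex_of_real (x j)))" for t
  proof -
    have "Rfun \<gamma> a N T t = (\<Sum>j\<in>J. complex_of_real (rfun \<gamma> a N T (m j)) *
              (of_nat (m j)) powr (- (\<i> * complex_of_real t)))"
      unfolding Rfun_def Mprime_def J_def[symmetric] m_def[symmetric]
      by (subst sum.reindex[OF inj]) simp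
    also have "\<dots> = (\<Sum>j\<in>J. complex_of_real (c j) *
       exp (- (\<i> * complex_of_real t) * complex_of_real (x j)))"
    proof (intro sum.cong refl)
      fix j assume j: "j \<in> J"
      have p: "m j > 0" using mprop[OF j] M0 by (cases "m j") auto
      show "complex_of_real (rfun \<gamma> a N T (m j)) * (of_nat (m j)) powr (- (\<i> * complex_of_real t)) =
         complex_of_real (c j) * exp (- (\<i> * complex_of_real t) * complex_of_real (x j))"
        using p by (simp add: rf[OF j] powr_def x_def)
    qed
    finally show ?thesis .
  qed
  define E where "E = (\<lambda>j k. exp (- ((T * (x j - x k))^2) / 2))"
  have integrand: "(cmod (Rfun \<gamma> a N T t))^2 * Phi (t / T) =
      (\<Sum>j\<in>J. \<Sum>k\<in>J. c j * c k * (cos (t * (x j - x k)) * Phi (t / T)))" for t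
    unfolding Rf sq_norm_sum[OF fJ] by (simp add: sum_distrib_left sum_distrib_right mult_ac)
  have HI: "((\<lambda>t. (cmod (Rfun \<gamma> a N T t))^2 * Phi (t / T)) has_integral
       (\<Sum>j\<in>J. \<Sum>k\<in>J. c j * c k * (T * sqrt (2*pi) * E j k))) UNIV"
    unfolding integrand E_def
    by (intro has_integral_sum fJ has_integral_mult_right gauss_cos T0)
  define q where "q = exp (-1/4::real)"
  have q: "0 \<le> q" "q < 1" by (auto simp: q_def)
  have Ebd: "E j k \<le> exp (3/8) * q ^ nat \<bar>k - j\<bar>" if j: "j \<in> J" and k: "k \<in> J" for j k
  proof -
    define d where "d = \<bar>k - j\<bar>"
    have gap: "\<bar>x j - x k\<bar> \<ge> (of_int d - 1) * L"
    proof (cases "j < k")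
      case True
      have "x k - x j \<ge> of_int k * L - of_int (j+1) * L" using xb[OF j] xb[OF k] by linarith
      thus ?thesis using True by (simp add: d_def algebra_simps)
    next
      case False
      have "x j - x k \<ge> of_int j * L - of_int (k+1) * L" using xb[OF j] xb[OF k] by linarith
      thus ?thesis using False by (simp add: d_def algebra_simps)
    qed
    have "(T * (x j - x k))^2 / 2 \<ge> of_int d / 4 - 3/8"
    proof (cases "d = 0")
      case True
      have a1: "(T * (x j - x k))^2 \<ge> 0" by simp
      have a2: "of_int d = (0::real)" using True by simp
      show ?thesis using a1 a2 by linarith
    next
      case False
      hence d1: "of_int d - 1 \<ge> (0::real)" using d_def by simp
      have h1: "T * \<bar>x j - x k\<bar> \<ge> T * ((of_int d - 1) * L)" using gap T0 by (intro mult_left_mono) auto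
      have h2: "T * ((of_int d - 1) * L) = (of_int d - 1) * (T * L)" by simp
      have h3: "(of_int d - 1) * (T * L) \<ge> (of_int d - 1) * (1/2)"
        using d1 TL by (intro mult_left_mono) auto
      have h4: "\<bar>T * (x j - x k)\<bar> = T * \<bar>x j - x k\<bar>" using T0 by (simp add: abs_mult)
      have h: "\<bar>T * (x j - x k)\<bar> \<ge> (of_int d - 1) / 2" using h1 h2 h3 h4 by linarith
      have "(T * (x j - x k))^2 = \<bar>T * (x j - x k)\<bar>^2" by simp
      also have "\<dots> \<ge> ((of_int d - 1) / 2)^2" using h d1 by (intro power_mono) auto
      finally have "(T * (x j - x k))^2 \<ge> ((of_int d - 1) / 2)^2" .
      moreover have "((of_int d - 1) / 2)^2 \<ge> (2 * of_int d - 3) / (4::real)"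
      proof -
        have "(of_int d - 2)^2 \<ge> (0::real)" by simp
        thus ?thesis by (simp add: power2_eq_square field_simps)
      qed
      ultimately show ?thesis by simp
    qed
    hence "E j k \<le> exp (3/8 - of_int d / 4)" unfolding E_def by simp
    also have "exp (3/8 - of_int d / 4 :: real) = exp (3/8) * exp (of_nat (nat d) * (-1/4))"
    proof -
      have "real (nat d) = of_int d" by (simp add: d_def)
      thus ?thesis by (simp add: exp_add[symmetric])
    qed
    also have "\<dots> = exp (3/8) * q ^ nat d" unfolding q_def by (subst exp_of_nat_mult[symmetric]) simp
    finally show ?thesis by (simp add: d_def)
  qed
  have Esum: "(\<Sum>k\<in>J. E j k) \<le> K" if j: "j \<in> J" for j
  proof -
    have "(\<Sum>k\<in>J. E j k) \<le> (\<Sum>k\<in>J. exp (3/8) * q ^ nat \<bar>k - j\<bar>)"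
      using Ebd j by (intro sum_mono) auto
    also have "\<dots> = exp (3/8) * (\<Sum>k\<in>J. q ^ nat \<bar>k - j\<bar>)" by (simp add: sum_distrib_left)
    also have "(\<Sum>k\<in>J. q ^ nat \<bar>k - j\<bar>) = (\<Sum>k\<in>(\<lambda>k. k - j) ` J. q ^ nat \<bar>k\<bar>)"
      by (subst sum.reindex) (auto simp: inj_on_def)
    also have "\<dots> \<le> 2 / (1 - q)" using fJ q by (intro geom_half) auto
    finally show ?thesis unfolding K_def q_def by simp
  qed
  have Enn: "E j k \<ge> 0" for j k by (simp add: E_def)
  have Esym: "E j k = E k j" for j k by (simp add: E_def power_mult_distrib power2_commute)
  have csum: "(\<Sum>j\<in>J. (c j)^2) \<le> 4 * (\<Sum>n\<in>M. g n)"
  proof -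
    define P where "P = (\<lambda>j n. (1 + 1/T) powi (j - 1) \<le> real n \<and> real n \<le> (1 + 1/T) powi (j + 2))"
    have c2: "(c j)^2 = (\<Sum>n\<in>{n\<in>M. P j n}. g n)" for j
      unfolding c_def rj_def M_def[symmetric] g_def P_def
      by (rule real_sqrt_pow2) (auto intro: sum_nonneg)
    have "(\<Sum>j\<in>J. (c j)^2) = (\<Sum>j\<in>J. \<Sum>n\<in>{n\<in>M. P j n}. g n)" by (simp add: c2)
    also have "\<dots> = (\<Sum>n\<in>M. \<Sum>j\<in>{j\<in>J. P j n}. g n)"
      by (rule sum.swap_restrict[OF fJ fM])
    also have "\<dots> \<le> (\<Sum>n\<in>M. 4 * g n)"
    proof (intro sum_mono)
      fix n assume n: "n \<in> M"
      have sub: "{j\<in>J. P j n} \<subseteq> {idx n - 2 .. idx n + 1}"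
      proof
        fix j assume "j \<in> {j\<in>J. P j n}"
        hence "exp (of_int (j-1) * L) \<le> real n \<and> real n \<le> exp (of_int (j+2) * L)"
          by (simp add: P_def powi)
        hence "of_int (j-1) * L \<le> ln (real n) \<and> ln (real n) \<le> of_int (j+2) * L"
          using pos[OF n] by (metis exp_le_cancel_iff exp_ln)
        hence "of_int (j-1) \<le> ln (real n) / L \<and> ln (real n) / L \<le> of_int (j+2)"
          using L0 by (simp add: pos_le_divide_eq pos_divide_le_eq)
        hence "j - 1 \<le> idx n \<and> idx n \<le> j + 2" unfolding idx_def
          by (metis floor_le_iff floor_mono floor_of_int le_floor_iff less_le_trans order.refl le_less) 
        thus "j \<in> {idx n - 2 .. idx n + 1}" by auto
      qed
      have "card {j\<in>J. P j n} \<le> card {idx n - 2 .. idx n + 1}"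
        by (rule card_mono) (use sub in auto)
      also have "\<dots> = 4" by simp
      finally have cd: "card {j\<in>J. P j n} \<le> 4" .
      have "(\<Sum>j\<in>{j\<in>J. P j n}. g n) = real (card {j\<in>J. P j n}) * g n" by simp
      also have "\<dots> \<le> 4 * g n" using cd by (intro mult_right_mono) (auto simp: g_def)
      finally show "(\<Sum>j\<in>{j\<in>J. P j n}. g n) \<le> 4 * g n" .
    qed
    finally show ?thesis by (simp add: sum_distrib_left)
  qed
  have "(\<Sum>j\<in>J. \<Sum>k\<in>J. c j * c k * E j k) \<le> (\<Sum>j\<in>J. (c j)^2 * (\<Sum>k\<in>J. E j k))"
    by (rule cs_bound[OF fJ]) (auto simp: Enn Esym)
  also have "\<dots> \<le> (\<Sum>j\<in>J. (c j)^2 * K)"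
    using Esum by (intro sum_mono mult_left_mono) auto
  also have "\<dots> = K * (\<Sum>j\<in>J. (c j)^2)" by (simp add: sum_distrib_left mult_ac)
  also have "\<dots> \<le> K * (4 * (\<Sum>n\<in>M. g n))"
    using csum by (intro mult_left_mono) (auto simp: K_def)
  finally have main: "(\<Sum>j\<in>J. \<Sum>k\<in>J. c j * c k * E j k) \<le> K * (4 * (\<Sum>n\<in>M. g n))" .
  have "(\<Sum>j\<in>J. \<Sum>k\<in>J. c j * c k * (T * sqrt (2*pi) * E j k)) =
        (T * sqrt (2*pi)) * (\<Sum>j\<in>J. \<Sum>k\<in>J. c j * c k * E j k)"
    by (simp add: sum_distrib_left mult_ac)
  also have "\<dots> \<le> (T * sqrt (2*pi)) * (K * (4 * (\<Sum>n\<in>M. g n)))"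
    using main T0 by (intro mult_left_mono) auto
  finally have fin: "(\<Sum>j\<in>J. \<Sum>k\<in>J. c j * c k * (T * sqrt (2*pi) * E j k)) \<le>
       (4 * sqrt (2*pi) * K) * T * (\<Sum>n\<in>M. g n)" by (simp add: mult_ac)
  show ?thesis using HI fin integral_unique[OF HI] unfolding M_def g_def
    by (auto intro: has_integral_integrable)
qed

theorem lemma5:
  fixes \<gamma> a \<kappa> :: real
  assumes "0 < \<gamma>" "\<gamma> < 1" "1 < a" "a < 1 / \<gamma>" "0 < \<kappa>" "\<kappa> \<le> 1"
  shows "\<exists>C T0. \<forall>T\<ge>T0. let N = nat \<lfloor>T powr \<kappa>\<rfloor> in
           (\<lambda>t. (cmod (Rfun \<gamma> a N T t))^2 * Phi (t / T)) integrable_on UNIV \<and>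
           integral UNIV (\<lambda>t. (cmod (Rfun \<gamma> a N T t))^2 * Phi (t / T))
             \<le> C * T * (\<Sum>n\<in>Mcal \<gamma> a N. (fmult \<gamma> N n)^2)"
proof (intro exI allI impI)
  fix T :: real assume "T \<ge> 2"
  thus "let N = nat \<lfloor>T powr \<kappa>\<rfloor> in
           (\<lambda>t. (cmod (Rfun \<gamma> a N T t))^2 * Phi (t / T)) integrable_on UNIV \<and>
           integral UNIV (\<lambda>t. (cmod (Rfun \<gamma> a N T t))^2 * Phi (t / T))
             \<le> (4 * sqrt (2*pi) * (exp (3/8) * (2 / (1 - exp (-1/4))))) * T * (\<Sum>n\<in>Mcal \<gamma> a N. (fmult \<gamma> N n)^2)"
    unfolding Let_def by (rule core)
qed

end
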